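(* Let $c\ge 1$, let $\ell$ be a $c$-approximate pseudo-metric on $\mathcal{Y}$, and let $\mathcal{H}\subseteq\mathcal{Y}^{\mathcal{X}}$ satisfy $\operatorname{diam}(\mathcal{H})<\infty$. Then every scaled Littlestone tree $\mathcal{T}$ realizable by $\mathcal{H}$ has a branch $b$ such that $\sum_{t}\gamma_{b_{\le t}}\le 4c\,\Phi(\mathcal{H})$ (sum over all internal nodes on the branch; over $t=0,\dots,D-1$ if the depth $D$ is finite). Consequently $\mathbb{D}_{\mathrm{onl}}(\mathcal{H})\le 4c\,\Phi(\mathcal{H})$.
   Context: Let $\mathcal{X}$ be a set (instance domain), $\mathcal{Y}$ a set (label space), $\ell:\mathcal{Y}\times\mathcal{Y}\to\mathbb{R}_{\ge0}$ a loss. For $c\ge1$, $\ell$ is a $c$-approximate pseudo-metric if $\ell(y,y)=0$, $\ell(y_1,y_2)=\ell(y_2,y_1)$, and $\ell(y_1,y_2)\le c(\ell(y_1,y_3)+\ell(y_2,y_3))$ for all $y_1,y_2,y_3\in\mathcal{Y}$. For $\mathcal{H}\subseteq\mathcal{Y}^{\mathcal{X}}$ define $d_\ell(f,g)=\sup_{x\in\mathcal{X}}\ell(f(x),g(x))$ and $\operatorname{diam}(\mathcal{H})=\sup_{f,g\in\mathcal{H}}d_\ell(f,g)$. For $U\subseteq\mathcal{H}$ and $\varepsilon>0$, $N(U,\varepsilon)$ is the minimum cardinality of a set $S\subseteq\mathcal{H}$ such that every $u\in U$ has some $s\in S$ with $d_\ell(u,s)\le\varepsilon$ ($+\infty$ if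 no finite such set exists). The entropy potential is $\Phi(U)=\int_0^{\operatorname{diam}(\mathcal{H})}\log_2 N(U,\varepsilon)\,d\varepsilon\in[0,+\infty]$. A scaled Littlestone tree of depth $D\le\infty$ is a complete binary tree whose internal nodes $u\in\{0,1\}^{<D}$ are labeled by $x_u\in\mathcal{X}$ and whose two outgoing edges are labeled $s_{u,0},s_{u,1}\in\mathcal{Y}$; the gap at $u$ is $\gamma_u=\ell(s_{u,0},s_{u,1})$. It is realizable by $\mathcal{H}$ if for every branch $b\in\{0,1\}^D$ and every finite $n\le D$ there is $h\in\mathcal{H}$ with $h(x_{b_{\le t}})=s_{b_{\le t},b_{t+1}}$ for $t=0,\dots,n-1$, where $b_{\le t}$ is the length-$t$ prefix of $b$. The online dimension is $\mathbb{D}_{\mathrm{onl}}(\mathcal{H})=\sup_{\mathcal{T}}\inf_{b}\sum_{t=0}^{D(\mathcal{T})-1}\gamma_{b_{\le t}}$, the sup over scaled Littlestone trees $\mathcal{T}$ realizable by $\mathcal{H}$ (of any depth $D(\mathcal{T})\le\infty$) and the inf over branches $b$ of $\mathcal{T}$. *)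

theory Defs
  imports "HOL-Analysis.Analysis"
begin

definition approx_pseudo_metric :: "real \<Rightarrow> ('y \<Rightarrow> 'y \<Rightarrow> real) \<Rightarrow> bool" where
  "approx_pseudo_metric c l \<longleftrightarrow>
     c \<ge> 1 \<and> (\<forall>y1 y2. l y1 y2 \<ge> 0) \<and> (\<forall>y. l y y = 0) \<and> (\<forall>y1 y2. l y1 y2 = l y2 y1) \<and>
     (\<forall>y1 y2 y3. l y1 y2 \<le> c * (l y1 y3 + l y2 y3))"

definition dist_l :: "('y \<Rightarrow> 'y \<Rightarrow> real) \<Rightarrow> ('x \<Rightarrow> 'y) \<Rightarrow> ('x \<Rightarrow> 'y) \<Rightarrow> ennreal" where
  "dist_l l f g = (SUP x. ennreal (l (f x) (g x)))"

definition diam_l :: "('y \<Rightarrow> 'y \<Rightarrow> real) \<Rightarrow> ('x \<Rightarrow> 'y) set \<Rightarrow> ennreal" where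
  "diam_l l H = (SUP f\<in>H. SUP g\<in>H. dist_l l f g)"

text \<open>Covering number N(U,eps) with centres from H (infinity if no finite cover exists).\<close>
definition cover_num :: "('y \<Rightarrow> 'y \<Rightarrow> real) \<Rightarrow> ('x \<Rightarrow> 'y) set \<Rightarrow> ('x \<Rightarrow> 'y) set \<Rightarrow> real \<Rightarrow> enat" where
  "cover_num l H U eps = Inf {enat (card S) | S. finite S \<and> S \<subseteq> H \<and>
        (\<forall>u\<in>U. \<exists>s\<in>S. dist_l l u s \<le> ennreal eps)}"

definition log2_enat :: "enat \<Rightarrow> ennreal" where
  "log2_enat n = (case n of enat k \<Rightarrow> ennreal (log 2 (real k)) | \<infinity> \<Rightarrow> \<infinity>)"

definition entropy_potential :: "('y \<Rightarrow> 'y \<Rightarrow> real) \<Rightarrow> ('x \<Rightarrow> 'y) set \<Rightarrow> ('x \<Rightarrow> 'y) set \<Rightarrow> ennreal" where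
  "entropy_potential l H U =
     (\<integral>\<^sup>+ eps. log2_enat (cover_num l H U eps) *
         indicator {e. 0 \<le> e \<and> ennreal e \<le> diam_l l H} eps \<partial>lborel)"

text \<open>Scaled Littlestone trees: depth D (an enat, possibly infinite), node labels
  X :: bool list \<Rightarrow> 'x and edge labels S :: bool list \<Rightarrow> bool \<Rightarrow> 'y; internal nodes are
  the lists u with length u < D.  Branches are infinite bool sequences b; only their first
  D entries matter.  The length-t prefix of b is map b [0..<t], and the edge taken at that
  node is b t.\<close>

definition prefix_of :: "(nat \<Rightarrow> bool) \<Rightarrow> nat \<Rightarrow> bool list" where
  "prefix_of b t = map b [0..<t]"

definition realizable ::
  "('x \<Rightarrow> 'y) set \<Rightarrow> enat \<Rightarrow> (bool list \<Rightarrow> 'x) \<Rightarrow> (bool list \<Rightarrow> bool \<Rightarrow> 'y) \<Rightarrow> bool" where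
  "realizable H D X S \<longleftrightarrow>
     (\<forall>b. \<forall>n::nat. enat n \<le> D \<longrightarrow>
        (\<exists>h\<in>H. \<forall>t<n. h (X (prefix_of b t)) = S (prefix_of b t) (b t)))"

definition branch_gain ::
  "('y \<Rightarrow> 'y \<Rightarrow> real) \<Rightarrow> enat \<Rightarrow> (bool list \<Rightarrow> bool \<Rightarrow> 'y) \<Rightarrow> (nat \<Rightarrow> bool) \<Rightarrow> ennreal" where
  "branch_gain l D S b =
     (\<Sum>t. if enat t < D then ennreal (l (S (prefix_of b t) False) (S (prefix_of b t) True)) else 0)"

definition online_dim :: "('y \<Rightarrow> 'y \<Rightarrow> real) \<Rightarrow> ('x \<Rightarrow> 'y) set \<Rightarrow> ennreal" where
  "online_dim l H =
     (SUP T \<in> {(D, X, S). realizable H D X S}.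
        (case T of (D, X, S) \<Rightarrow> (INF b. branch_gain l D S b)))"

end

theory Submission
  imports Defs
begin

lemma cover_le:
  assumes "finite S" "S \<subseteq> H" "\<forall>u\<in>U. \<exists>s\<in>S. dist_l l u s \<le> ennreal e"
  shows "cover_num l H U e \<le> enat (card S)"
  unfolding cover_num_def using assms by (intro Inf_lower) blast

lemma cover_attained:
  assumes "cover_num l H U e = enat k"
  shows "\<exists>S. finite S \<and> S \<subseteq> H \<and> (\<forall>u\<in>U. \<exists>s\<in>S. dist_l l u s \<le> ennreal e) \<and> card S = k"
proof -
  let ?A = "{enat (card S) | S. finite S \<and> S \<subseteq> H \<and> (\<forall>u\<in>U. \<exists>s\<in>S. dist_l l u s \<le> ennreal e)}"
  have ne: "?A \<noteq> {}"
  proof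
    assume "?A = {}"
    then have "Inf ?A = \<infinity>" by (simp only: Inf_empty top_enat_def)
    with assms show False by (simp add: cover_num_def)
  qed
  then obtain x where "x \<in> ?A" by blast
  then have "(LEAST x. x \<in> ?A) \<in> ?A" by (rule LeastI)
  with ne have "Inf ?A \<in> ?A" by (simp add: Inf_enat_def)
  then show ?thesis using assms unfolding cover_num_def by auto
qed

lemma cover_mono:
  assumes "U \<subseteq> U'"
  shows "cover_num l H U e \<le> cover_num l H U' e"
  unfolding cover_num_def using assms by (intro Inf_superset_mono) blast

lemma cover_anti:
  assumes "e \<le> e'"
  shows "cover_num l H U e' \<le> cover_num l H U e"
  unfolding cover_num_def
proof (rule Inf_superset_mono, rule subsetI)
  fix z assume "z \<in> {enat (card S) |S. finite S \<and> S \<subseteq> H \<and> (\<forall>u\<in>U. \<exists>s\<in>S. dist_l l u s \<le> ennreal e)}"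
  then obtain S where S: "z = enat (card S)" "finite S" "S \<subseteq> H" "\<forall>u\<in>U. \<exists>s\<in>S. dist_l l u s \<le> ennreal e"
    by blast
  have "\<forall>u\<in>U. \<exists>s\<in>S. dist_l l u s \<le> ennreal e'"
  proof
    fix u assume "u \<in> U"
    then obtain s where "s \<in> S" "dist_l l u s \<le> ennreal e" using S(4) by blast
    moreover have "ennreal e \<le> ennreal e'" using assms by (rule ennreal_leI)
    ultimately show "\<exists>s\<in>S. dist_l l u s \<le> ennreal e'" by (blast intro: order_trans)
  qed
  then show "z \<in> {enat (card S) |S. finite S \<and> S \<subseteq> H \<and> (\<forall>u\<in>U. \<exists>s\<in>S. dist_l l u s \<le> ennreal e')}"
    using S by blast
qed

lemma cover_ge1:
  assumes "U \<noteq> {}"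
  shows "1 \<le> cover_num l H U e"
  unfolding cover_num_def
proof (rule Inf_greatest)
  fix x assume "x \<in> {enat (card S) | S. finite S \<and> S \<subseteq> H \<and> (\<forall>u\<in>U. \<exists>s\<in>S. dist_l l u s \<le> ennreal e)}"
  then obtain S where "x = enat (card S)" "finite S" "\<forall>u\<in>U. \<exists>s\<in>S. dist_l l u s \<le> ennreal e" by auto
  moreover have "S \<noteq> {}" using assms calculation(3) by auto
  ultimately show "1 \<le> x" by (simp add: Suc_leI card_gt_0_iff one_enat_def)
qed

lemma dist_le_pt:
  assumes "dist_l l u s \<le> ennreal e" "0 \<le> e"
  shows "l (u x) (s x) \<le> e"
proof -
  have "ennreal (l (u x) (s x)) \<le> dist_l l u s"
    unfolding dist_l_def by (rule SUP_upper) simp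
  then have "ennreal (l (u x) (s x)) \<le> ennreal e"
    using assms(1) by (rule order_trans)
  then show ?thesis using assms(2) by (simp add: ennreal_le_iff)
qed

lemma cover_split:
  assumes apm: "approx_pseudo_metric c l"
    and U0: "U0 \<subseteq> {h\<in>U. h x = y0}" and U1: "U1 \<subseteq> {h\<in>U. h x = y1}"
    and e: "0 \<le> e" "2 * c * e < l y0 y1"
  shows "cover_num l H U0 e + cover_num l H U1 e \<le> cover_num l H U e"
proof (cases "cover_num l H U e")
  case infinity then show ?thesis by simp
next
  case (enat k)
  from cover_attained[OF this] obtain S where S: "finite S" "S \<subseteq> H"
    "\<forall>u\<in>U. \<exists>s\<in>S. dist_l l u s \<le> ennreal e" "card S = k" by blast
  define S0 where "S0 = {s\<in>S. \<exists>u\<in>U0. dist_l l u s \<le> ennreal e}"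
  define S1 where "S1 = {s\<in>S. \<exists>u\<in>U1. dist_l l u s \<le> ennreal e}"
  have disj: "S0 \<inter> S1 = {}"
  proof (rule ccontr)
    assume "S0 \<inter> S1 \<noteq> {}"
    then obtain s u0 u1 where "u0 \<in> U0" "u1 \<in> U1" "dist_l l u0 s \<le> ennreal e" "dist_l l u1 s \<le> ennreal e"
      unfolding S0_def S1_def by blast
    then have a: "l (u0 x) (s x) \<le> e" "l (u1 x) (s x) \<le> e" "u0 x = y0" "u1 x = y1"
      using dist_le_pt[OF _ e(1)] U0 U1 by auto
    have "l y0 y1 \<le> c * (l y0 (s x) + l y1 (s x))" using apm unfolding approx_pseudo_metric_def by blast
    also have "\<dots> \<le> c * (e + e)" using a apm unfolding approx_pseudo_metric_def
      by (intro mult_left_mono) auto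
    finally show False using e by simp
  qed
  have c0: "cover_num l H U0 e \<le> enat (card S0)"
  proof (rule cover_le)
    show "finite S0" "S0 \<subseteq> H" using S unfolding S0_def by auto
    show "\<forall>u\<in>U0. \<exists>s\<in>S0. dist_l l u s \<le> ennreal e"
    proof
      fix u assume u: "u \<in> U0"
      then have "u \<in> U" using U0 by auto
      then obtain s where "s \<in> S" "dist_l l u s \<le> ennreal e" using S(3) by blast
      then show "\<exists>s\<in>S0. dist_l l u s \<le> ennreal e" using u unfolding S0_def by blast
    qed
  qed
  have c1: "cover_num l H U1 e \<le> enat (card S1)"
  proof (rule cover_le)
    show "finite S1" "S1 \<subseteq> H" using S unfolding S1_def by auto
    show "\<forall>u\<in>U1. \<exists>s\<in>S1. dist_l l u s \<le> ennreal e"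
    proof
      fix u assume u: "u \<in> U1"
      then have "u \<in> U" using U1 by auto
      then obtain s where "s \<in> S" "dist_l l u s \<le> ennreal e" using S(3) by blast
      then show "\<exists>s\<in>S1. dist_l l u s \<le> ennreal e" using u unfolding S1_def by blast
    qed
  qed

  have "card S0 + card S1 = card (S0 \<union> S1)"
    using disj S(1) by (simp add: S0_def S1_def card_Un_disjoint)
  also have "\<dots> \<le> card S" using S(1) by (intro card_mono) (auto simp: S0_def S1_def)
  finally have "enat (card S0) + enat (card S1) \<le> enat k" using S(4) by simp
  have "cover_num l H U0 e + cover_num l H U1 e \<le> enat (card S0) + enat (card S1)"
    by (rule add_mono[OF c0 c1])
  also note \<open>enat (card S0) + enat (card S1) \<le> enat k\<close>
  finally show ?thesis using enat by simp
qed


lemma antimono_meas: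
  fixes g :: "real \<Rightarrow> ennreal"
  assumes "\<And>x y. x \<le> y \<Longrightarrow> g y \<le> g x"
  shows "g \<in> borel_measurable borel"
proof (rule borel_measurableI_less)
  fix y
  have "is_interval {x. g x < y}" unfolding is_interval_1
  proof (intro ballI allI impI)
    fix a b x assume "a \<in> {x. g x < y}" "b \<in> {x. g x < y}" "a \<le> x \<and> x \<le> b"
    then have "g x \<le> g a" "g a < y" using assms by auto
    then show "x \<in> {x. g x < y}" by simp
  qed
  then show "{x \<in> space borel. g x < y} \<in> sets borel"
    using real_interval_borel_measurable by simp
qed

lemma log2_enat_mono:
  assumes "m \<le> n"
  shows "log2_enat m \<le> log2_enat n"
proof (cases n)
  case infinity then show ?thesis by (simp add: log2_enat_def)
next
  case (enat k)
  then obtain j where j: "m = enat j" "j \<le> k" using assms by (cases m) auto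
  have "log 2 (real j) \<le> log 2 (real k)"
  proof (cases "j = 0")
    case True
    have "0 \<le> log 2 (real k)" if "k > 0" using that by simp
    then show ?thesis using j True by (cases "k = 0") (auto simp: log_def)
  next
    case False
    then show ?thesis using j by simp
  qed
  then show ?thesis using j enat by (simp add: log2_enat_def ennreal_leI)
qed

definition fU :: "('y \<Rightarrow> 'y \<Rightarrow> real) \<Rightarrow> ('x \<Rightarrow> 'y) set \<Rightarrow> ('x \<Rightarrow> 'y) set \<Rightarrow> real \<Rightarrow> ennreal" where
  "fU l H U e = log2_enat (cover_num l H U e) * indicator {e. 0 \<le> e \<and> ennreal e \<le> diam_l l H} e"

lemma ep_fU: "entropy_potential l H U = (\<integral>\<^sup>+ e. fU l H U e \<partial>lborel)"
  unfolding entropy_potential_def fU_def ..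

lemma fU_meas: "fU l H U \<in> borel_measurable lborel"
proof -
  have g: "(\<lambda>e. log2_enat (cover_num l H U e)) \<in> borel_measurable borel"
    by (rule antimono_meas) (intro log2_enat_mono cover_anti)
  have "is_interval {e. 0 \<le> e \<and> ennreal e \<le> diam_l l H}" unfolding is_interval_1
  proof (intro ballI allI impI)
    fix a b x assume a: "a \<in> {e. 0 \<le> e \<and> ennreal e \<le> diam_l l H}"
      "b \<in> {e. 0 \<le> e \<and> ennreal e \<le> diam_l l H}" "a \<le> x \<and> x \<le> b"
    then have "ennreal x \<le> ennreal b" by (intro ennreal_leI) simp
    then show "x \<in> {e. 0 \<le> e \<and> ennreal e \<le> diam_l l H}" using a order_trans[OF \<open>ennreal x \<le> ennreal b\<close>] by auto
  qed
  then have i: "{e. 0 \<le> e \<and> ennreal e \<le> diam_l l H} \<in> sets borel"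
    by (rule real_interval_borel_measurable)
  show ?thesis unfolding fU_def using g i by simp
qed

lemma log_ineq:
  fixes n0 n1 n :: nat
  assumes "1 \<le> n0" "1 \<le> n1" "n0 + n1 \<le> n"
  shows "log 2 n0 + log 2 n1 + 2 \<le> 2 * log 2 n"
proof -
  have "real (4 * n0 * n1) \<le> real ((n0 + n1)^2)"
  proof -
    have "4 * n0 * n1 \<le> (n0 + n1)^2"
    proof -
      have "int (4 * n0 * n1) \<le> int ((n0 + n1)^2)"
        using sum_squares_ge_zero[of "int n0 - int n1" 0] by (simp add: power2_eq_square algebra_simps)
      then show ?thesis by linarith
    qed
    then show ?thesis by linarith
  qed
  also have "\<dots> \<le> real (n^2)" using assms by (intro of_nat_mono power_mono) auto
  finally have le: "4 * real n0 * real n1 \<le> real n ^ 2" by simp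
  have "log 2 (4 * real n0 * real n1) \<le> log 2 (real n ^ 2)"
    using assms le by (subst log_le_cancel_iff) (auto simp: Suc_le_eq)
  moreover have "log 2 (4 * real n0 * real n1) = 2 + log 2 n0 + log 2 n1"
  proof -
    have l4: "log 2 (4::real) = 2" using log_nat_power[of 2 2 2] by simp
    show ?thesis using assms by (simp add: log_mult Suc_le_eq l4)
  qed
  moreover have "log 2 (real n ^ 2) = 2 * log 2 n"
    using assms by (simp add: log_nat_power)
  ultimately show ?thesis by linarith
qed


lemma gamma_le_diam:
  assumes "h0 \<in> H" "h1 \<in> H"
  shows "ennreal (l (h0 x) (h1 x)) \<le> diam_l l H"
proof -
  have "ennreal (l (h0 x) (h1 x)) \<le> dist_l l h0 h1" unfolding dist_l_def by (rule SUP_upper) simp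
  also have "\<dots> \<le> diam_l l H" unfolding diam_l_def
    by (rule SUP_upper2[OF assms(1)]) (rule SUP_upper[OF assms(2)])
  finally show ?thesis .
qed

lemma ennreal_ineq3:
  fixes A B z C :: real
  assumes "0 \<le> A" "0 \<le> B" "0 \<le> z" "A + B + 2 * z \<le> 2 * C"
  shows "ennreal A + ennreal B + 2 * ennreal z \<le> 2 * ennreal C"
proof -
  have C: "0 \<le> C" using assms by linarith
  have e1: "ennreal (A+B+2*z) = ennreal (A+B) + ennreal (2*z)" using assms by (intro ennreal_plus) auto
  have e2: "ennreal (A+B) = ennreal A + ennreal B" using assms by (intro ennreal_plus) auto
  have e3: "ennreal (2*z) = 2 * ennreal z" using ennreal_mult[of 2 z] assms by simp
  have e4: "ennreal (2*C) = 2 * ennreal C" using ennreal_mult[of 2 C] C by simp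
  have "ennreal (A+B+2*z) \<le> ennreal (2*C)" using assms(4) by (rule ennreal_leI)
  then show ?thesis unfolding e1 e2 e3 e4 .
qed

lemma pointwise:
  assumes apm: "approx_pseudo_metric c l" and VH: "V \<subseteq> H"
    and V0: "V0 = {h\<in>V. h x = y0}" and V1: "V1 = {h\<in>V. h x = y1}"
    and ne: "V0 \<noteq> {}" "V1 \<noteq> {}"
  shows "fU l H V0 e + fU l H V1 e + 2 * indicator {0..<l y0 y1 / (2*c)} e \<le> 2 * fU l H V e"
proof -
  let ?D = "{e. 0 \<le> e \<and> ennreal e \<le> diam_l l H}"
  let ?g = "l y0 y1" let ?d = "l y0 y1 / (2*c)"
  have c1: "c \<ge> 1" and g0: "?g \<ge> 0" using apm unfolding approx_pseudo_metric_def by auto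
  have dg: "?d \<le> ?g" using c1 g0 by (simp add: divide_le_eq) (smt (verit) mult_le_cancel_left1)
  obtain h0 h1 where h: "h0 \<in> V0" "h1 \<in> V1" using ne by blast
  have gd: "ennreal ?g \<le> diam_l l H"
    using gamma_le_diam[of h0 H h1 l x] h V0 V1 VH by auto
  show ?thesis
  proof (cases "e \<in> ?D")
    case False
    have "e \<notin> {0..<?d}"
    proof
      assume "e \<in> {0..<?d}"
      then have "ennreal e \<le> ennreal ?g" using dg by (intro ennreal_leI) auto
      then show False using False gd \<open>e \<in> {0..<?d}\<close> by auto
    qed
    then show ?thesis using False unfolding fU_def by simp
  next
    case True
    have m0: "cover_num l H V0 e \<le> cover_num l H V e" by (rule cover_mono) (auto simp: V0)
    have m1: "cover_num l H V1 e \<le> cover_num l H V e" by (rule cover_mono) (auto simp: V1)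
    show ?thesis
    proof (cases "cover_num l H V e")
      case infinity
      then show ?thesis using True unfolding fU_def by (simp add: log2_enat_def ennreal_mult_top)
    next
      case (enat n)
      obtain n0 where n0: "cover_num l H V0 e = enat n0" "1 \<le> n0" "n0 \<le> n"
        using m0 enat cover_ge1[OF ne(1), of l H e]
        by (cases "cover_num l H V0 e") (auto simp: one_enat_def)
      obtain n1 where n1: "cover_num l H V1 e = enat n1" "1 \<le> n1" "n1 \<le> n"
        using m1 enat cover_ge1[OF ne(2), of l H e]
        by (cases "cover_num l H V1 e") (auto simp: one_enat_def)
      have l0: "0 \<le> log 2 (real n0)" "0 \<le> log 2 (real n1)" "0 \<le> log 2 (real n)"
        using n0 n1 by auto
      have key: "log 2 n0 + log 2 n1 + 2 * indicator {0..<?d} e \<le> 2 * log 2 n"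
      proof (cases "e \<in> {0..<?d}")
        case True
        have "2 * c * e < 2 * c * ?d" using True c1 by (intro mult_strict_left_mono) auto
        also have "\<dots> = ?g" using c1 by simp
        finally have "cover_num l H V0 e + cover_num l H V1 e \<le> cover_num l H V e"
          using True by (intro cover_split[OF apm, of _ V x y0 _ y1]) (auto simp: V0 V1)
        then have "n0 + n1 \<le> n" using n0 n1 enat by simp
        then show ?thesis using log_ineq[OF n0(2) n1(2)] True by simp
      next
        case False
        have "log 2 n0 \<le> log 2 n" "log 2 n1 \<le> log 2 n" using n0 n1 by auto
        then show ?thesis using False by simp
      qed
      have "fU l H V0 e + fU l H V1 e + 2 * indicator {0..<?d} e
          = ennreal (log 2 n0) + ennreal (log 2 n1) + 2 * ennreal (indicator {0..<?d} e)"
        using True n0 n1 unfolding fU_def log2_enat_def by (simp add: ennreal_indicator)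
      also have "\<dots> \<le> 2 * ennreal (log 2 n)"
        by (rule ennreal_ineq3) (use l0 key in auto)
      also have "\<dots> = 2 * fU l H V e"
        using True enat unfolding fU_def log2_enat_def by simp
      finally show ?thesis .
    qed
  qed
qed

lemma integral_step:
  assumes apm: "approx_pseudo_metric c l" and VH: "V \<subseteq> H"
    and V0: "V0 = {h\<in>V. h x = y0}" and V1: "V1 = {h\<in>V. h x = y1}"
    and ne: "V0 \<noteq> {}" "V1 \<noteq> {}"
  shows "entropy_potential l H V0 + entropy_potential l H V1 + 2 * ennreal (l y0 y1 / (2*c))
     \<le> 2 * entropy_potential l H V"
proof -
  have c1: "c \<ge> 1" and g0: "l y0 y1 \<ge> 0" using apm unfolding approx_pseudo_metric_def by auto
  let ?d = "l y0 y1 / (2*c)"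
  have "entropy_potential l H V0 + entropy_potential l H V1 + 2 * ennreal ?d
      = (\<integral>\<^sup>+ e. fU l H V0 e + fU l H V1 e + 2 * indicator {0..<?d} e \<partial>lborel)"
    using c1 g0 fU_meas[of l H V0] fU_meas[of l H V1]
    by (simp add: ep_fU nn_integral_add nn_integral_cmult)
  also have "\<dots> \<le> (\<integral>\<^sup>+ e. 2 * fU l H V e \<partial>lborel)"
    by (intro nn_integral_mono pointwise[OF assms])
  also have "\<dots> = 2 * entropy_potential l H V"
    using fU_meas[of l H V] by (simp add: ep_fU nn_integral_cmult)
  finally show ?thesis .
qed

lemma min_step:
  fixes a b p d :: ennreal
  assumes "a + b + 2 * d \<le> 2 * p"
  shows "min a b + d \<le> p"
proof -
  have "2 * (min a b + d) \<le> a + b + 2 * d"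
    by (simp add: distrib_left mult_2 add_mono min.coboundedI1 min.coboundedI2 add.assoc)
  also note assms
  finally show ?thesis by (subst (asm) ennreal_mult_le_mult_iff) auto
qed


definition vs :: "('x \<Rightarrow> 'y) set \<Rightarrow> (bool list \<Rightarrow> 'x) \<Rightarrow> (bool list \<Rightarrow> bool \<Rightarrow> 'y) \<Rightarrow> bool list \<Rightarrow> ('x \<Rightarrow> 'y) set" where
  "vs H X S u = {h\<in>H. \<forall>t<length u. h (X (take t u)) = S (take t u) (u!t)}"

lemma vs_Nil: "vs H X S [] = H" by (simp add: vs_def)

lemma vs_sub: "vs H X S u \<subseteq> H" by (auto simp: vs_def)

lemma vs_snoc: "vs H X S (u@[b]) = {h \<in> vs H X S u. h (X u) = S u b}"
  by (auto simp: vs_def nth_append less_Suc_eq)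

lemma prefix_take: "t \<le> n \<Longrightarrow> take t (prefix_of b n) = prefix_of b t"
  by (simp add: prefix_of_def take_map)

lemma prefix_nth: "t < n \<Longrightarrow> prefix_of b n ! t = b t"
  by (simp add: prefix_of_def)

lemma prefix_Suc: "prefix_of b (Suc n) = prefix_of b n @ [b n]"
  by (simp add: prefix_of_def)

lemma prefix_len: "length (prefix_of b n) = n"
  by (simp add: prefix_of_def)

lemma vs_nonempty:
  assumes "realizable H D X S" "enat (length u) \<le> D"
  shows "vs H X S u \<noteq> {}"
proof -
  define b' where "b' = (\<lambda>t. if t < length u then u!t else False)"
  have pu: "prefix_of b' (length u) = u"
    by (rule nth_equalityI) (auto simp: prefix_of_def b'_def)
  obtain h where h: "h \<in> H" "\<forall>t<length u. h (X (prefix_of b' t)) = S (prefix_of b' t) (b' t)"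
    using assms unfolding realizable_def by blast
  have "h \<in> vs H X S u"
  proof -
    have "\<forall>t<length u. h (X (take t u)) = S (take t u) (u!t)"
    proof (intro allI impI)
      fix t assume t: "t < length u"
      have "take t u = prefix_of b' t" using prefix_take[of t "length u" b'] t pu by simp
      moreover have "u!t = b' t" using t by (simp add: b'_def)
      ultimately show "h (X (take t u)) = S (take t u) (u!t)" using h t by simp
    qed
    then show ?thesis using h by (simp add: vs_def)
  qed
  then show ?thesis by blast
qed

definition chs :: "('y \<Rightarrow> 'y \<Rightarrow> real) \<Rightarrow> ('x \<Rightarrow> 'y) set \<Rightarrow> (bool list \<Rightarrow> 'x) \<Rightarrow> (bool list \<Rightarrow> bool \<Rightarrow> 'y) \<Rightarrow> bool list \<Rightarrow> bool" where
  "chs l H X S u = (entropy_potential l H (vs H X S (u@[True])) < entropy_potential l H (vs H X S (u@[False])))"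

primrec pre :: "(bool list \<Rightarrow> bool) \<Rightarrow> nat \<Rightarrow> bool list" where
  "pre F 0 = []"
| "pre F (Suc n) = pre F n @ [F (pre F n)]"

lemma prefix_pre: "prefix_of (\<lambda>n. F (pre F n)) n = pre F n"
  by (induction n) (simp_all add: prefix_of_def)

lemma greedy_step:
  assumes apm: "approx_pseudo_metric c l"
    and ne: "vs H X S (u@[False]) \<noteq> {}" "vs H X S (u@[True]) \<noteq> {}"
  shows "entropy_potential l H (vs H X S (u@[chs l H X S u]))
          + ennreal (l (S u False) (S u True) / (2*c)) \<le> entropy_potential l H (vs H X S u)"
proof -
  let ?P = "entropy_potential l H"
  have "?P (vs H X S (u@[False])) + ?P (vs H X S (u@[True])) + 2 * ennreal (l (S u False) (S u True) / (2*c))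
     \<le> 2 * ?P (vs H X S u)"
    by (rule integral_step[OF apm vs_sub vs_snoc vs_snoc ne])
  then have m: "min (?P (vs H X S (u@[False]))) (?P (vs H X S (u@[True]))) + ennreal (l (S u False) (S u True) / (2*c))
     \<le> ?P (vs H X S u)" by (rule min_step)
  have "?P (vs H X S (u@[chs l H X S u])) = min (?P (vs H X S (u@[False]))) (?P (vs H X S (u@[True])))"
    unfolding chs_def
    by (cases "?P (vs H X S (u@[True])) < ?P (vs H X S (u@[False]))") (auto simp: min_def)
  then show ?thesis using m by simp
qed


lemma tree_bound:
  assumes apm: "approx_pseudo_metric c l" and R: "realizable H D X S"
  shows "\<exists>b. branch_gain l D S b \<le> ennreal (2 * c) * entropy_potential l H H"
proof -
  let ?P = "entropy_potential l H"
  let ?F = "chs l H X S"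
  define b where "b = (\<lambda>n. ?F (pre ?F n))"
  have pb: "prefix_of b n = pre ?F n" for n unfolding b_def by (rule prefix_pre)
  have lp: "length (pre ?F n) = n" for n by (induction n) auto
  have c1: "c \<ge> 1" using apm unfolding approx_pseudo_metric_def by auto
  define d where "d = (\<lambda>t. l (S (pre ?F t) False) (S (pre ?F t) True) / (2*c))"
  have inv: "enat n \<le> D \<Longrightarrow> ?P (vs H X S (pre ?F n)) + (\<Sum>t<n. ennreal (d t)) \<le> ?P H" for n
  proof (induction n)
    case 0
    then show ?case by (simp add: vs_Nil)
  next
    case (Suc n)
    have nD: "enat n \<le> D" using Suc.prems by (meson Suc_ile_eq order_less_imp_le)
    have ne: "vs H X S (pre ?F n @ [bb]) \<noteq> {}" for bb
      by (rule vs_nonempty[OF R]) (use Suc.prems lp in simp)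
    have st: "?P (vs H X S (pre ?F (Suc n))) + ennreal (d n) \<le> ?P (vs H X S (pre ?F n))"
      using greedy_step[OF apm ne ne] by (simp add: d_def)
    have "?P (vs H X S (pre ?F (Suc n))) + (\<Sum>t<Suc n. ennreal (d t))
        = (?P (vs H X S (pre ?F (Suc n))) + ennreal (d n)) + (\<Sum>t<n. ennreal (d t))"
      by (simp add: ac_simps)
    also have "\<dots> \<le> ?P (vs H X S (pre ?F n)) + (\<Sum>t<n. ennreal (d t))"
      using st by (rule add_right_mono)
    also have "\<dots> \<le> ?P H" using Suc.IH[OF nD] .
    finally show ?case .
  qed
  have sumd: "(\<Sum>t<n. ennreal (d t)) \<le> ?P H" if "enat n \<le> D" for n
  proof -
    have "(\<Sum>t<n. ennreal (d t)) \<le> ?P (vs H X S (pre ?F n)) + (\<Sum>t<n. ennreal (d t))" by simp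
    then show ?thesis using inv[OF that] by (rule order_trans)
  qed
  have part: "(\<Sum>t<n. if enat t < D then ennreal (d t) else 0) \<le> ?P H" for n
  proof (cases "enat n \<le> D")
    case True
    have "(\<Sum>t<n. if enat t < D then ennreal (d t) else 0) = (\<Sum>t<n. ennreal (d t))"
    proof (intro sum.cong refl)
      fix t assume "t \<in> {..<n}"
      then have "enat t < D" using True by (metis enat_ord_simps(2) lessThan_iff order_less_le_trans)
      then show "(if enat t < D then ennreal (d t) else 0) = ennreal (d t)" by simp
    qed
    then show ?thesis using sumd[OF True] by simp
  next
    case False
    then obtain k where k: "D = enat k" "k < n" by (cases D) auto
    have "(\<Sum>t<n. if enat t < D then ennreal (d t) else 0) = (\<Sum>t\<in>{t\<in>{..<n}. t < k}. ennreal (d t))"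
      using k by (simp only: enat_ord_simps(2)) (rule sum.inter_filter[symmetric], simp)
    also have "{t\<in>{..<n}. t < k} = {..<k}" using k by auto
    finally show ?thesis using sumd[of k] k by simp
  qed
  have gam: "ennreal (l (S (prefix_of b t) False) (S (prefix_of b t) True)) = ennreal (2*c) * ennreal (d t)" for t
  proof -
    have "0 \<le> d t" using apm c1 unfolding d_def approx_pseudo_metric_def by auto
    then have "ennreal (2*c) * ennreal (d t) = ennreal (2*c * d t)" using c1 by (simp add: ennreal_mult)
    also have "2*c * d t = l (S (prefix_of b t) False) (S (prefix_of b t) True)"
      using c1 by (simp add: d_def pb)
    finally show ?thesis by simp
  qed
  have "branch_gain l D S b \<le> ennreal (2 * c) * ?P H"
    unfolding branch_gain_def
  proof (rule suminf_le_const)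
    show "summable (\<lambda>t. if enat t < D then ennreal (l (S (prefix_of b t) False) (S (prefix_of b t) True)) else 0)"
      by (rule summableI)
    fix n
    have "(\<Sum>t<n. if enat t < D then ennreal (l (S (prefix_of b t) False) (S (prefix_of b t) True)) else 0)
        = ennreal (2*c) * (\<Sum>t<n. if enat t < D then ennreal (d t) else 0)"
      unfolding sum_distrib_left
    proof (rule sum.cong[OF refl])
      fix t
      show "(if enat t < D then ennreal (l (S (prefix_of b t) False) (S (prefix_of b t) True)) else 0)
          = ennreal (2*c) * (if enat t < D then ennreal (d t) else 0)"
        by (cases "enat t < D"; simp only: if_True if_False gam mult_zero_right)
    qed
    also have "\<dots> \<le> ennreal (2 * c) * ?P H" using part by (rule mult_left_mono) simp
    finally show "(\<Sum>t<n. if enat t < D then ennreal (l (S (prefix_of b t) False) (S (prefix_of b t) True)) else 0)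
        \<le> ennreal (2 * c) * ?P H" .
  qed
  then show ?thesis by blast
qed

theorem theorem3p1:
  fixes c :: real and l :: "'y \<Rightarrow> 'y \<Rightarrow> real" and H :: "('x \<Rightarrow> 'y) set"
  assumes "c \<ge> 1"
    and "approx_pseudo_metric c l"
    and "diam_l l H < \<infinity>"
  shows "(\<forall>D X S. realizable H D X S \<longrightarrow>
            (\<exists>b. branch_gain l D S b \<le> ennreal (4 * c) * entropy_potential l H H))
       \<and> online_dim l H \<le> ennreal (4 * c) * entropy_potential l H H"
proof -
  have le: "ennreal (2 * c) * entropy_potential l H H \<le> ennreal (4 * c) * entropy_potential l H H"
    using assms(1) by (intro mult_right_mono ennreal_leI) auto
  have A: "\<forall>D X S. realizable H D X S \<longrightarrow>
            (\<exists>b. branch_gain l D S b \<le> ennreal (4 * c) * entropy_potential l H H)"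
    using tree_bound[OF assms(2)] le by (meson order_trans)
  have "online_dim l H \<le> ennreal (4 * c) * entropy_potential l H H"
    unfolding online_dim_def
  proof (rule SUP_least)
    fix T assume "T \<in> {(D, X, S). realizable H D X S}"
    then obtain D X S where T: "T = (D, X, S)" "realizable H D X S" by auto
    then obtain b where "branch_gain l D S b \<le> ennreal (4 * c) * entropy_potential l H H"
      using A by blast
    then show "(case T of (D, X, S) \<Rightarrow> INF b. branch_gain l D S b) \<le> ennreal (4 * c) * entropy_potential l H H"
      using T by (simp add: INF_lower2)
  qed
  with A show ?thesis by blast
qed

end
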